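(* Let $\alpha\neq0$, $\sigma\in\mathbb{R}\setminus\{0,1\}$, $K>0$, $C\in\mathbb{R}$. For $\beta\in(0,1)$ and $q>0$ with $1+\alpha\sigma q>0$ define $$u_\beta(q)=\frac{K\sigma}{\sigma-1}(1+\alpha\sigma q)^{\beta-\frac1\sigma}q^{1-\beta}\left[1+\Big(\beta-\frac1\sigma\Big)\int_0^1(1-t)^{-\beta}(1+t\alpha\sigma q)^{-(1-\frac1\sigma)}\,dt\right]+C$$ (which equals $\frac{K\sigma}{\sigma-1}(1+\alpha\sigma q)^{\beta-\frac1\sigma}q^{1-\beta}[1+\frac{\beta-1/\sigma}{1-\beta}{}_2F_1(1-\frac1\sigma,1;2-\beta;-\alpha\sigma q)]+C$ when $|\alpha\sigma q|<1$). (i) (HARA limit) For every $q>0$ with $1+\alpha\sigma q>0$, $$\lim_{\beta\to0^+}u_\beta(q)=\frac{K}{\alpha(\sigma-1)}\Big[(1+\alpha\sigma q)^{\frac{\sigma-1}{\sigma}}-1\Big]+C.$$ (ii) (CREMR limit) Suppose moreover $\alpha\sigma>0$ and $1+\frac1\sigma>0$, and for $\beta\in(0,1)$ put $$D_\beta=\frac{K\sigma}{\sigma-1}\,\frac{\Gamma(1-\beta)\,\Gamma(\frac1\sigma)}{\Gamma(\frac1\sigma-\beta)}\,(\alpha\sigma)^{\beta-1}$$ (with $1/\Gamma$ equal to $0$ at non-positive integers). Then for every $q>\frac{1}{\alpha\sigma}$, $$\lim_{\beta\to1^-}\big(u_\beta(q)+D_\beta\big)=\frac{K\sigma}{\sigma-1}\,\frac{(1+\alpha\sigma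 q)^{1-\frac1\sigma}}{q}\left[q-\frac{\sigma-1}{\alpha\sigma}\,{}_2F_1\!\left(1,1;1+\tfrac1\sigma;-\tfrac{1}{\alpha\sigma q}\right)\right]+C .$$ The HARA function in (i) has $u'(q)=K(1+\alpha\sigma q)^{-1/\sigma}$ and $-u'(q)/u''(q)=(1+\alpha\sigma q)/\alpha$; the CREMR function in (ii) has $u'(q)=K(1+\alpha\sigma q)^{1-\frac1\sigma}q^{-1}$ and satisfies $-\frac{d\ln[u'(q)+qu''(q)]}{d\ln[q u'(q)]}=\frac{1}{\sigma-1}$.
   Context: ${}_2F_1(a,b;c;z)=\sum_{n\ge0}\frac{(a)_n(b)_n}{(c)_n}\frac{z^n}{n!}$ ($|z|<1$) is the Gauss hypergeometric function with rising Pochhammer symbols $(a)_n$; $\Gamma$ is the gamma function. *)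

theory Defs
  imports "HOL-Analysis.Analysis"
begin

text \<open>Gauss hypergeometric function as its power series (meaningful for |z| < 1).\<close>
definition hyp2F1 :: "real \<Rightarrow> real \<Rightarrow> real \<Rightarrow> real \<Rightarrow> real" where
  "hyp2F1 a b c z =
     (\<Sum>n. pochhammer a n * pochhammer b n / pochhammer c n * z ^ n / fact n)"

definition u_beta :: "real \<Rightarrow> real \<Rightarrow> real \<Rightarrow> real \<Rightarrow> real \<Rightarrow> real \<Rightarrow> real" where
  "u_beta K \<sigma> \<alpha> C \<beta> q =
     K * \<sigma> / (\<sigma> - 1) * (1 + \<alpha> * \<sigma> * q) powr (\<beta> - 1 / \<sigma>) * q powr (1 - \<beta>)
       * (1 + (\<beta> - 1 / \<sigma>) *
            integral {0..1} (\<lambda>t. (1 - t) powr (- \<beta>) * (1 + t * \<alpha> * \<sigma> * q) powr (- (1 - 1 / \<sigma>))))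
     + C"

text \<open>D_beta, with 1/Gamma written as rGamma (zero at non-positive integers).\<close>
definition D_beta :: "real \<Rightarrow> real \<Rightarrow> real \<Rightarrow> real \<Rightarrow> real" where
  "D_beta K \<sigma> \<alpha> \<beta> =
     K * \<sigma> / (\<sigma> - 1) * (Gamma (1 - \<beta>) * Gamma (1 / \<sigma>) * rGamma (1 / \<sigma> - \<beta>))
       * (\<alpha> * \<sigma>) powr (\<beta> - 1)"

end

theory Submission
  imports Defs
begin


lemma int_1mt_powr:
  fixes b :: real assumes "b > -1"
  shows "(\<lambda>t. (1 - t) powr b) integrable_on {0..1}"
proof -
  have "(\<lambda>t. t powr (1 - 1) * (1 - t) powr (b + 1 - 1)) integrable_on {0..1}"
    using integrable_Beta'[of 1 "b+1"] assms by simp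
  note h = this
  show ?thesis
    by (rule integrable_spike_finite[OF _ _ h, of "{0}"]) auto
qed

lemma part1:
  fixes \<alpha> \<sigma> K C q :: real
  assumes "\<alpha> \<noteq> 0" "\<sigma> \<noteq> 0" "\<sigma> \<noteq> 1" "q > 0" "1 + \<alpha> * \<sigma> * q > 0"
  shows "((\<lambda>\<beta>. u_beta K \<sigma> \<alpha> C \<beta> q) \<longlongrightarrow>
               K / (\<alpha> * (\<sigma> - 1)) * ((1 + \<alpha> * \<sigma> * q) powr ((\<sigma> - 1) / \<sigma>) - 1) + C)
            (at_right 0)"
proof -
  define x where "x = \<alpha> * \<sigma> * q"
  define s where "s = 1 / \<sigma>"
  define g where "g t = (1 + t * x) powr (- (1 - s))" for t
  define I where "I \<beta> = integral {0..1} (\<lambda>t. (1 - t) powr (- \<beta>) * g t)" for \<beta>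
  have x0: "x \<noteq> 0" "1 + x > 0" using assms by (auto simp: x_def)
  have s0: "s \<noteq> 0" using assms by (auto simp: s_def)
  have u: "u_beta K \<sigma> \<alpha> C \<beta> q = K * \<sigma> / (\<sigma> - 1) * (1 + x) powr (\<beta> - s) * q powr (1 - \<beta>) * (1 + (\<beta> - s) * I \<beta>) + C" for \<beta>
    by (simp add: u_beta_def I_def g_def x_def s_def mult.assoc)
  have gpos: "1 + t * x > 0" if "t \<in> {0..1}" for t
  proof (cases "x \<ge> 0")
    case True then show ?thesis using that by (simp add: add_pos_nonneg)
  next
    case False
    then have "t * x \<ge> 1 * x" using that by (intro mult_right_mono_neg) auto
    then show ?thesis using x0 by simp
  qed
  have gcont: "continuous_on {0..1} g"
    unfolding g_def by (intro continuous_intros) (metis atLeastAtMost_iff gpos less_irrefl)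
  obtain M where M0: "\<forall>y\<in>g ` {0..1}. norm y \<le> M"
    using compact_imp_bounded[OF compact_continuous_image[OF gcont compact_Icc]]
    unfolding bounded_iff by blast
  have M: "norm (g t) \<le> M" if "t \<in> {0..1}" for t using M0 that by blast
  define I0 where "I0 = integral {0..1} g"
  have Ilim: "(I \<longlongrightarrow> I0) (at_right 0)"
  proof (rule tendsto_at_right_sequentially[where b="1/2"])
    fix S :: "nat \<Rightarrow> real"
    assume S: "\<And>n. 0 < S n" "\<And>n. S n < 1/2" "S \<longlonglongrightarrow> 0"
    define f where "f n t = (1 - t) powr (- S n) * g t" for n t
    define h where "h t = ((1 - t) powr (- 1/2) + 1) * M" for t
    define G where "G t = (if t = 1 then 0 else g t)" for t
    have fi: "f n integrable_on {0..1}" for n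
    proof -
      have "(\<lambda>t. g t * (1 - t) powr (- S n)) absolutely_integrable_on {0..1}"
      proof (rule absolutely_integrable_bounded_measurable_product_real)
        show "g \<in> borel_measurable (lebesgue_on {0..1})"
          by (rule continuous_imp_measurable_on_sets_lebesgue[OF gcont]) auto
        show "bounded (g ` {0..1})"
          using compact_imp_bounded[OF compact_continuous_image[OF gcont compact_Icc]] .
        show "(\<lambda>t. (1 - t) powr (- S n)) absolutely_integrable_on {0..1}"
          using S(2)[of n] by (intro nonnegative_absolutely_integrable_1 int_1mt_powr) auto
      qed auto
      then show ?thesis unfolding f_def by (simp add: mult.commute set_lebesgue_integral_eq_integral(1))
    qed
    have hi: "h integrable_on {0..1}"
      unfolding h_def by (intro integrable_on_mult_left integrable_add int_1mt_powr integrable_const_ivl) auto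
    have le: "norm (f n t) \<le> h t" if "t \<in> {0..1}" for n t
    proof -
      have "(1 - t) powr (- S n) \<le> (1 - t) powr (- 1/2) + 1"
      proof (cases "t = 1")
        case False
        then have "(1 - t) powr (- S n) \<le> (1 - t) powr (- 1/2)"
          using that S(2)[of n] by (intro powr_mono') auto
        then show ?thesis by simp
      qed simp
      then have "norm (f n t) \<le> ((1 - t) powr (- 1/2) + 1) * M"
        unfolding f_def norm_mult using M[OF that]
        by (intro mult_mono) auto
      then show ?thesis by (simp add: h_def)
    qed
    have conv: "(\<lambda>n. f n t) \<longlonglongrightarrow> G t" if "t \<in> {0..1}" for t
    proof (cases "t = 1")
      case True then show ?thesis by (simp add: f_def G_def)
    next
      case False
      then have "t < 1" using that by auto
      have "(\<lambda>n. (1 - t) powr (- S n) * g t) \<longlonglongrightarrow> (1 - t) powr (- 0) * g t"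
        using \<open>t < 1\<close> by (intro tendsto_intros S(3)) auto
      then show ?thesis using False by (simp add: f_def G_def)
    qed
    have "(\<lambda>n. integral {0..1} (f n)) \<longlonglongrightarrow> integral {0..1} G"
      by (rule dominated_convergence(2)[OF fi hi le conv])
    moreover have "integral {0..1} G = I0"
      unfolding I0_def by (rule integral_spike[where S="{1}"]) (auto simp: G_def)
    ultimately show "(\<lambda>n. I (S n)) \<longlonglongrightarrow> I0" unfolding I_def f_def[abs_def] by simp
  qed simp
  have I0v: "I0 = ((1 + x) powr s - 1) / (s * x)"
  proof -
    have "(g has_integral ((1 + 1 * x) powr s / (s * x) - (1 + 0 * x) powr s / (s * x))) {0..1}"
    proof (rule fundamental_theorem_of_calculus)
      fix t :: real assume t: "t \<in> {0..1}"
      have "((\<lambda>t. (1 + t * x) powr s / (s * x)) has_real_derivative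
              (s * (1 + t * x) powr (s - 1) * x) / (s * x)) (at t within {0..1})"
        using gpos[OF t] by (auto intro!: derivative_eq_intros)
      then show "((\<lambda>t. (1 + t * x) powr s / (s * x)) has_vector_derivative g t) (at t within {0..1})"
        using s0 x0 by (simp add: has_real_derivative_iff_has_vector_derivative g_def)
    qed simp
    then show ?thesis unfolding I0_def by (simp add: integral_unique diff_divide_distrib)
  qed
  have lim: "((\<lambda>\<beta>. K * \<sigma> / (\<sigma> - 1) * (1 + x) powr (\<beta> - s) * q powr (1 - \<beta>) * (1 + (\<beta> - s) * I \<beta>) + C)
     \<longlongrightarrow> K * \<sigma> / (\<sigma> - 1) * (1 + x) powr (0 - s) * q powr (1 - 0) * (1 + (0 - s) * I0) + C) (at_right 0)"
    using x0 assms(4) by (intro tendsto_intros Ilim) auto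
  have eq: "K * \<sigma> / (\<sigma> - 1) * (1 + x) powr (0 - s) * q powr (1 - 0) * (1 + (0 - s) * I0) + C
      = K / (\<alpha> * (\<sigma> - 1)) * ((1 + \<alpha> * \<sigma> * q) powr ((\<sigma> - 1) / \<sigma>) - 1) + C"
  proof -
    have e1: "(\<sigma> - 1) / \<sigma> = 1 - s" using assms by (simp add: s_def field_simps)
    have e2: "(1 + x) powr (1 - s) = (1 + x) * (1 + x) powr (- s)"
      using x0 by (simp add: powr_diff powr_minus field_simps)
    have e3: "(1 + x) powr (- s) * (1 + x) powr s = 1"
      using x0 by (simp add: powr_minus field_simps)
    have "K * \<sigma> / (\<sigma> - 1) * (1 + x) powr (0 - s) * q powr (1 - 0) * (1 + (0 - s) * I0)
       = K * \<sigma> * q / (\<sigma> - 1) * (1 + x) powr (- s) * (x + 1 - (1 + x) powr s) / x"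
      using s0 x0 assms(4) assms(3) by (simp add: I0v field_simps)
    also have "\<dots> = K / (\<alpha> * (\<sigma> - 1)) * ((1 + x) * (1 + x) powr (- s) - (1 + x) powr (- s) * (1 + x) powr s)"
      using assms x0 unfolding x_def by (simp add: field_simps)
    also have "\<dots> = K / (\<alpha> * (\<sigma> - 1)) * ((1 + \<alpha> * \<sigma> * q) powr ((\<sigma> - 1) / \<sigma>) - 1)"
      by (simp only: e3 e1 e2[symmetric]) (simp add: x_def)
    finally show ?thesis by simp
  qed
  show ?thesis using lim unfolding eq u[symmetric] .
qed



lemma notnpi: fixes s :: real assumes "s > -1" "s \<noteq> 0" shows "s \<notin> \<int>\<^sub>\<le>\<^sub>0"
proof
  assume "s \<in> \<int>\<^sub>\<le>\<^sub>0"
  then obtain k :: int where k: "s = of_int k" "k \<le> 0" by (auto elim!: nonpos_Ints_cases)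
  with assms have "k > -1" by simp
  with k assms show False by simp
qed

lemma gam_id:
  fixes e s :: real assumes "0 < e" "s > -1" "s \<noteq> 0"
  shows "Gamma e * Gamma s * rGamma (s - 1 + e) = Beta e (s + 1) * (s - 1 + e) * (s + e) / s"
proof -
  have g1: "Gamma (s + 1) = s * Gamma s" using Gamma_plus1[OF notnpi[OF assms(2,3)]] .
  have r1: "rGamma (s - 1 + e) = (s - 1 + e) * rGamma (s + e)"
    using rGamma_plus1[of "s - 1 + e"] by (simp add: algebra_simps)
  have r2: "rGamma (s + e) = (s + e) * rGamma (e + (s + 1))"
    using rGamma_plus1[of "s + e"] by (simp add: algebra_simps)
  show ?thesis using assms unfolding Beta_altdef g1 r1 r2 by (simp add: field_simps)
qed

lemma mom_int:
  fixes s :: real assumes "s > -1"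
  shows "((\<lambda>t. t ^ n * (1 - t) powr s) has_integral Beta (real n + 1) (s + 1)) {0..1}"
proof -
  have h: "((\<lambda>t. t powr (real n + 1 - 1) * (1 - t) powr (s + 1 - 1)) has_integral Beta (real n + 1) (s + 1)) {0..1}"
    using assms by (intro has_integral_Beta_real) auto
  show ?thesis
    by (rule has_integral_spike_finite_eq[of "{0}", THEN iffD1, OF _ _ h]) (auto simp: powr_realpow)
qed

lemma mom_val:
  fixes s :: real assumes "s > -1"
  shows "Beta (real n + 1) (s + 1) = fact n / pochhammer (s + 1) (Suc n)"
proof (induction n)
  case 0
  have "Beta 1 (s + 1) = Gamma (s + 1) * rGamma (s + 1 + 1)"
    by (simp add: Beta_altdef add_ac)
  also have "rGamma (s + 1) = (s + 1) * rGamma (s + 1 + 1)" using rGamma_plus1[of "s+1"] by simp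
  hence "rGamma (s + 1 + 1) = rGamma (s + 1) / (s + 1)" using assms by (simp add: field_simps)
  also have "Gamma (s + 1) * (rGamma (s + 1) / (s + 1)) = 1 / (s + 1)"
  proof -
    have G0: "Gamma (s + 1) \<noteq> 0" using assms Gamma_eq_zero_iff[of "s+1"] notnpi[of "s+1"] by auto
    have "Gamma (s + 1) * (rGamma (s + 1) / (s + 1)) = (Gamma (s + 1) * inverse (Gamma (s + 1))) / (s + 1)"
      by (simp add: rGamma_inverse_Gamma)
    also have "\<dots> = 1 / (s + 1)" using G0 by simp
    finally show ?thesis .
  qed
  finally show ?case by simp
next
  case (Suc n)
  have "(real n + 1 + (s + 1)) * Beta (real n + 1 + 1) (s + 1) = (real n + 1) * Beta (real n + 1) (s + 1)"
    by (rule Beta_plus1_left) (auto elim!: nonpos_Ints_cases)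
  hence "Beta (real (Suc n) + 1) (s + 1) = (real n + 1) * Beta (real n + 1) (s + 1) / (real n + 1 + (s + 1))"
    using assms by (simp add: field_simps)
  also have "\<dots> = fact (Suc n) / pochhammer (s + 1) (Suc (Suc n))"
    using assms pochhammer_pos[of "s+1" "Suc n"] unfolding Suc.IH
    by (simp add: pochhammer_Suc field_simps)
  finally show ?case .
qed



lemma geo_bound:
  fixes t x :: real assumes "0 \<le> t" "t \<le> 1" "x > 1"
  shows "\<bar>\<Sum>n<N. (- t / x) ^ n\<bar> \<le> x / (x - 1)"
proof -
  have "\<bar>\<Sum>n<N. (- t / x) ^ n\<bar> \<le> (\<Sum>n<N. \<bar>(- t / x) ^ n\<bar>)" by (rule sum_abs)
  also have "\<dots> \<le> (\<Sum>n<N. (1 / x) ^ n)"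
    using assms by (intro sum_mono) (auto simp: power_abs intro!: power_mono divide_right_mono)
  also have "\<dots> = (1 - (1 / x) ^ N) / (1 - 1 / x)" using assms by (simp add: sum_gp_strict)
  also have "\<dots> \<le> 1 / (1 - 1 / x)" using assms by (intro divide_right_mono) auto
  also have "\<dots> = x / (x - 1)" using assms by (simp add: field_simps)
  finally show ?thesis .
qed

lemma J_series:
  fixes s x :: real assumes s: "s > -1" and x: "x > 1"
  shows "(\<lambda>t. (1 - t) powr s / (x + t)) integrable_on {0..1}"
    "(\<lambda>n. Beta (real n + 1) (s + 1) * ((-1 / x) ^ n / x)) sums integral {0..1} (\<lambda>t. (1 - t) powr s / (x + t))"
proof -
  define f where "f N t = (\<Sum>n<N. t ^ n * (1 - t) powr s * ((-1 / x) ^ n / x))" for N t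
  define h where "h t = (1 - t) powr s * (1 / (x - 1))" for t
  define g where "g t = (1 - t) powr s / (x + t)" for t
  have fint: "(f N has_integral (\<Sum>n<N. Beta (real n + 1) (s + 1) * ((-1 / x) ^ n / x))) {0..1}" for N
    unfolding f_def by (intro has_integral_sum has_integral_mult_left mom_int s) auto
  have fform: "f N t = (1 - t) powr s / x * (\<Sum>n<N. (- t / x) ^ n)" for N t
    unfolding f_def sum_distrib_left
    by (intro sum.cong refl) (simp add: power_mult_distrib[symmetric] field_simps)
  have hi: "h integrable_on {0..1}" unfolding h_def
    by (intro integrable_on_mult_left int_1mt_powr s)
  have le: "norm (f N t) \<le> h t" if "t \<in> {0..1}" for N t
  proof -
    have "norm (f N t) = (1 - t) powr s / x * \<bar>\<Sum>n<N. (- t / x) ^ n\<bar>"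
      using x that by (simp add: fform abs_mult)
    also have "\<dots> \<le> (1 - t) powr s / x * (x / (x - 1))"
      using that x by (intro mult_left_mono geo_bound) auto
    also have "\<dots> = h t" using x by (simp add: h_def)
    finally show ?thesis .
  qed
  have conv: "(\<lambda>N. f N t) \<longlonglongrightarrow> g t" if "t \<in> {0..1}" for t
  proof -
    have "(\<lambda>n. (- t / x) ^ n) sums (1 / (1 - (- t / x)))"
      using that x by (intro geometric_sums) auto
    then have "(\<lambda>N. \<Sum>n<N. (- t / x) ^ n) \<longlonglongrightarrow> 1 / (1 - (- t / x))" by (simp add: sums_def)
    then have "(\<lambda>N. (1 - t) powr s / x * (\<Sum>n<N. (- t / x) ^ n)) \<longlonglongrightarrow> (1 - t) powr s / x * (1 / (1 - (- t / x)))"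
      by (intro tendsto_intros)
    moreover have "(1 - t) powr s / x * (1 / (1 - (- t / x))) = g t"
    proof -
      have "x + t > 0" using x that by auto
      have e: "1 - (- t / x) = (x + t) / x" using x by (simp add: field_simps)
      show ?thesis unfolding e g_def using x \<open>x + t > 0\<close> by simp
    qed
    ultimately show ?thesis by (simp add: fform)
  qed
  have fi: "f N integrable_on {0..1}" for N using fint by blast
  show "g integrable_on {0..1}" using dominated_convergence(1)[OF fi hi le conv] .
  have "(\<lambda>N. integral {0..1} (f N)) \<longlonglongrightarrow> integral {0..1} g"
    using dominated_convergence(2)[OF fi hi le conv] .
  note lim = this
  have ie: "integral {0..1} (f N) = (\<Sum>n<N. Beta (real n + 1) (s + 1) * ((-1 / x) ^ n / x))" for N
    using fint[of N] by (rule integral_unique)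
  show "(\<lambda>n. Beta (real n + 1) (s + 1) * ((-1 / x) ^ n / x)) sums integral {0..1} g"
    unfolding sums_def using lim unfolding ie .
qed

lemma hyp_id:
  fixes s x :: real assumes s: "s > -1" "s \<noteq> 0" and x: "x > 1"
  shows "(1 + 1 / x) * hyp2F1 1 1 (1 + s) (-1 / x) = 1 + s * integral {0..1} (\<lambda>t. (1 - t) powr s / (x + t))"
proof -
  define z where "z = -1 / x"
  define c where "c n = fact n / pochhammer (1 + s) n" for n
  define m where "m n = Beta (real n + 1) (s + 1)" for n
  define J where "J = integral {0..1} (\<lambda>t. (1 - t) powr s / (x + t))"
  have z: "\<bar>z\<bar> < 1" using x by (simp add: z_def)
  have ppos: "pochhammer (1 + s) n > 0" for n using s by (intro pochhammer_pos) auto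
  have cpos: "c n > 0" for n using ppos[of n] by (simp add: c_def)
  have csuc: "c (Suc n) = c n * (real n + 1) / (1 + s + real n)" for n
    using ppos[of n] s by (simp add: c_def pochhammer_Suc field_simps)
  have cdiff: "c (Suc n) - c n = - s * m n" for n
  proof -
    define P where "P = pochhammer (1 + s) n"
    define D where "D = 1 + s + real n"
    have P: "P > 0" using ppos by (simp add: P_def)
    have D: "D > 0" using s by (simp add: D_def)
    have "m n = fact n / pochhammer (1 + s) (Suc n)"
      unfolding m_def using mom_val[OF s(1), of n] by (simp add: add.commute)
    also have "\<dots> = fact n / P / D" by (simp add: P_def D_def pochhammer_Suc add_ac)
    finally have mn: "m n = fact n / P / D" .
    have "c (Suc n) - c n = fact n / P * ((real n + 1) / D - 1)"
      unfolding csuc by (simp add: c_def P_def D_def algebra_simps)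
    also have "(real n + 1) / D - 1 = - s / D" using D by (simp add: D_def field_simps)
    finally show ?thesis unfolding mn by simp
  qed
  have hyp: "hyp2F1 1 1 (1 + s) z = (\<Sum>n. c n * z ^ n)"
    unfolding hyp2F1_def c_def by (intro suminf_cong) (simp add: pochhammer_fact[symmetric])
  define \<rho> where "\<rho> = (1 + \<bar>z\<bar>) / 2"
  have \<rho>: "\<rho> < 1" "\<bar>z\<bar> \<le> \<rho>" using z by (auto simp: \<rho>_def)
  obtain N :: nat where N: "real N \<ge> \<bar>s\<bar> / (\<rho> - \<bar>z\<bar>)" using real_arch_simple by blast
  have summ: "summable (\<lambda>n. c n * z ^ n)"
  proof (rule summable_ratio_test[OF \<rho>(1)])
    fix n assume n: "N \<le> n"
    have d: "\<rho> - \<bar>z\<bar> > 0" using z by (simp add: \<rho>_def)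
    have "(real n + 1) * (\<rho> - \<bar>z\<bar>) \<ge> \<bar>s\<bar>"
    proof -
      have "real n + 1 \<ge> \<bar>s\<bar> / (\<rho> - \<bar>z\<bar>)" using N n by linarith
      then show ?thesis using d by (simp add: field_simps)
    qed
    moreover have "\<bar>s\<bar> + \<rho> * s \<ge> 0"
    proof (cases "s \<ge> 0")
      case True then show ?thesis using \<rho> z by (simp add: \<rho>_def)
    next
      case False
      have "\<bar>s\<bar> + \<rho> * s = (- s) * (1 - \<rho>)" using False by (simp add: algebra_simps)
      also have "\<dots> \<ge> 0" using False \<rho> by (intro mult_nonneg_nonneg) auto
      finally show ?thesis .
    qed
    ultimately have key: "(real n + 1) * \<bar>z\<bar> \<le> \<rho> * (1 + s + real n)"
      by (simp add: algebra_simps)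
    have "norm (c (Suc n) * z ^ Suc n) = c (Suc n) * \<bar>z\<bar> ^ Suc n"
      using cpos[of "Suc n"] by (simp add: abs_mult power_abs)
    also have "\<dots> = c n * \<bar>z\<bar> ^ n * ((real n + 1) * \<bar>z\<bar> / (1 + s + real n))"
      unfolding csuc by (simp add: field_simps)
    also have "\<dots> \<le> c n * \<bar>z\<bar> ^ n * \<rho>"
      using key s cpos[of n] by (intro mult_left_mono) (auto simp: field_simps)
    also have "\<dots> = \<rho> * norm (c n * z ^ n)" using cpos[of n] by (simp add: abs_mult power_abs)
    finally show "norm (c (Suc n) * z ^ Suc n) \<le> \<rho> * norm (c n * z ^ n)" .
  qed
  define F where "F = (\<Sum>n. c n * z ^ n)"
  have sF: "(\<lambda>n. c n * z ^ n) sums F" using summ by (simp add: F_def summable_sums)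
  have s1: "(\<lambda>n. c (Suc n) * z ^ Suc n) sums (F - 1)"
    using sF by (subst sums_Suc_iff) (simp add: c_def)
  have s2: "(\<lambda>n. z * (c n * z ^ n)) sums (z * F)" by (rule sums_mult[OF sF])
  have s3: "(\<lambda>n. c (Suc n) * z ^ Suc n - z * (c n * z ^ n)) sums (F - 1 - z * F)"
    by (rule sums_diff[OF s1 s2])
  have s4: "(\<lambda>n. m n * (z ^ n * (- z))) sums J"
    using J_series(2)[OF s(1) x] unfolding J_def m_def z_def by (simp add: field_simps)
  have s5: "(\<lambda>n. s * (m n * (z ^ n * (- z)))) sums (s * J)" by (rule sums_mult[OF s4])
  have "(\<lambda>n. c (Suc n) * z ^ Suc n - z * (c n * z ^ n)) = (\<lambda>n. s * (m n * (z ^ n * (- z))))"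
  proof
    fix n
    have "c (Suc n) * z ^ Suc n - z * (c n * z ^ n) = (c (Suc n) - c n) * z ^ Suc n"
      by (simp add: algebra_simps)
    also have "\<dots> = s * (m n * (z ^ n * (- z)))" by (simp add: cdiff algebra_simps)
    finally show "c (Suc n) * z ^ Suc n - z * (c n * z ^ n) = s * (m n * (z ^ n * (- z)))" .
  qed
  with s3 s5 have "F - 1 - z * F = s * J" using sums_unique2 by metis
  then have "(1 - z) * F = 1 + s * J" by (simp add: algebra_simps)
  moreover have "1 + 1 / x = 1 - z" by (simp add: z_def)
  ultimately show ?thesis unfolding hyp F_def[symmetric] J_def[symmetric] z_def[symmetric]
    by simp
qed



lemma hH_int:
  fixes s \<beta> :: real assumes "s > -1" "0 < \<beta>" "\<beta> < 1"
  shows "(\<lambda>v. v powr (- \<beta>) * (1 - v) powr s) integrable_on {0..1}"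
  using integrable_Beta'[of "1 - \<beta>" "s + 1"] assms by simp

lemma E2:
  fixes s y \<beta> :: real assumes s: "s > -1" "s \<noteq> 0" and b: "0 < \<beta>" "\<beta> < 1" and y: "0 < y" "y < 1"
  shows "((\<lambda>v. v powr (- \<beta>) * (1 - v) powr (s - 1)) has_integral
     ((s + 1 - \<beta>) * integral {0..y} (\<lambda>v. v powr (- \<beta>) * (1 - v) powr s) - y powr (1 - \<beta>) * (1 - y) powr s) / s) {0..y}"
proof -
  define hH where "hH v = v powr (- \<beta>) * (1 - v) powr s" for v
  define Fv where "Fv v = v powr (1 - \<beta>) * (1 - v) powr s" for v
  define dF where "dF v = (1 - \<beta>) * v powr (- \<beta>) * (1 - v) powr s - s * v powr (1 - \<beta>) * (1 - v) powr (s - 1)" for v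
  have hi: "hH integrable_on {0..y}" unfolding hH_def
    by (rule integrable_subinterval_real[OF hH_int[OF s(1) b]]) (use y in auto)
  have hint: "(hH has_integral integral {0..y} hH) {0..y}" using hi by (simp add: integrable_integral)
  have ftc: "(dF has_integral (Fv y - Fv 0)) {0..y}"
  proof (rule fundamental_theorem_of_calculus_interior)
    show "0 \<le> y" using y by simp
    show "continuous_on {0..y} Fv" unfolding Fv_def
      using b y by (intro continuous_intros continuous_on_powr') auto
    fix v assume v: "v \<in> {0<..<y}"
    then have v0: "0 < v" "v < 1" using y by auto
    have "(Fv has_real_derivative
        ((1 - \<beta>) * v powr (1 - \<beta> - 1) * (1 - v) powr s + v powr (1 - \<beta>) * (s * (1 - v) powr (s - 1) * (- 1)))) (at v)"
      unfolding Fv_def using v0 by (auto intro!: derivative_eq_intros)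
    moreover have "(1 - \<beta>) * v powr (1 - \<beta> - 1) * (1 - v) powr s + v powr (1 - \<beta>) * (s * (1 - v) powr (s - 1) * (- 1)) = dF v"
      by (simp add: dF_def algebra_simps)
    ultimately show "(Fv has_vector_derivative dF v) (at v)"
      by (simp add: has_real_derivative_iff_has_vector_derivative)
  qed
  have comb: "((\<lambda>v. ((s + 1 - \<beta>) * hH v - dF v) / s) has_integral
      ((s + 1 - \<beta>) * integral {0..y} hH - (Fv y - Fv 0)) / s) {0..y}"
    using has_integral_diff[OF has_integral_mult_right[OF hint, of "s + 1 - \<beta>"] ftc]
    by (intro has_integral_divide) simp
  have F0: "Fv 0 = 0" using b by (simp add: Fv_def)
  have pt: "v powr (- \<beta>) * (1 - v) powr (s - 1) = ((s + 1 - \<beta>) * hH v - dF v) / s" if "v \<in> {0..y} - {0}" for v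
  proof -
    have v0: "0 < v" "v < 1" using that y by auto
    have p1: "(1 - v) powr s = (1 - v) * (1 - v) powr (s - 1)"
      using v0 powr_add[of "1 - v" 1 "s - 1"] by simp
    have p2: "v powr (1 - \<beta>) = v * v powr (- \<beta>)"
      using v0 powr_add[of v 1 "- \<beta>"] by simp
    show ?thesis using s unfolding hH_def dF_def p1 p2 by (simp add: field_simps)
  qed
  have fin: "((\<lambda>v. v powr (- \<beta>) * (1 - v) powr (s - 1)) has_integral
      ((s + 1 - \<beta>) * integral {0..y} hH - (Fv y - Fv 0)) / s) {0..y}"
    by (rule has_integral_spike_finite_eq[of "{0}", THEN iffD1, OF _ _ comb]) (use pt in auto)
  have hHe: "hH = (\<lambda>v. v powr (- \<beta>) * (1 - v) powr s)" by (simp add: hH_def fun_eq_iff)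
  show ?thesis using fin unfolding F0 hHe by (simp add: Fv_def)
qed

lemma img_refl:
  fixes y :: real assumes y: "y > 0"
  shows "(\<lambda>x. 1 - x / y) ` {0..y} = {0..1}"
proof (intro equalityI subsetI)
  fix t assume "t \<in> (\<lambda>x. 1 - x / y) ` {0..y}"
  then show "t \<in> {0..1}" using y by (auto simp: field_simps)
next
  fix t :: real assume t: "t \<in> {0..1}"
  have "t = 1 - (y * (1 - t)) / y" using y by simp
  moreover have "y * (1 - t) \<in> {0..y}" using y t by auto
  ultimately show "t \<in> (\<lambda>x. 1 - x / y) ` {0..y}" by (rule image_eqI)
qed

lemma E1:
  fixes s x \<beta> G :: real assumes x: "x > 0" and b: "0 < \<beta>"
  assumes G: "((\<lambda>v. v powr (- \<beta>) * (1 - v) powr (s - 1)) has_integral G) {0..x / (1 + x)}"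
  shows "integral {0..1} (\<lambda>t. (1 - t) powr (- \<beta>) * (1 + t * x) powr (- (1 - s)))
          = (1 + x) powr (s - 1) * (x / (1 + x)) powr (\<beta> - 1) * G"
proof -
  define y where "y = x / (1 + x)"
  define g where "g v = v powr (- \<beta>) * (1 - v) powr (s - 1)" for v
  have y: "0 < y" "y < 1" using x by (auto simp: y_def)
  have "((\<lambda>t. g ((- y) *\<^sub>R t + y)) has_integral (1 / \<bar>- y\<bar> ^ DIM(real)) *\<^sub>R G)
          ((\<lambda>v. (1 / (- y)) *\<^sub>R v + - ((1 / (- y)) *\<^sub>R y)) ` cbox 0 y)"
    by (rule has_integral_affinity) (use G y in \<open>auto simp: g_def y_def\<close>)
  moreover have "(\<lambda>v. (1 / (- y)) *\<^sub>R v + - ((1 / (- y)) *\<^sub>R y)) ` cbox 0 y = {0..1}"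
  proof -
    have "(\<lambda>v. (1 / (- y)) *\<^sub>R v + - ((1 / (- y)) *\<^sub>R y)) = (\<lambda>v. (- 1 / y) * v + 1)"
      using y by (auto simp: fun_eq_iff field_simps)
    then show ?thesis using y img_refl[of y] by simp
  qed
  ultimately have h1: "((\<lambda>t. g (y - y * t)) has_integral G / y) {0..1}"
    using y by (simp add: algebra_simps)
  define k where "k = y powr \<beta> * (1 + x) powr (s - 1)"
  have h2: "((\<lambda>t. k * g (y - y * t)) has_integral k * (G / y)) {0..1}"
    by (rule has_integral_mult_right[OF h1])
  have pt: "k * g (y - y * t) = (1 - t) powr (- \<beta>) * (1 + t * x) powr (- (1 - s))" if "t \<in> {0..1}" for t
  proof -
    have t: "0 \<le> t" "t \<le> 1" using that by auto
    have a1: "(y - y * t) powr (- \<beta>) = y powr (- \<beta>) * (1 - t) powr (- \<beta>)"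
      using y t by (subst powr_mult[symmetric]) (auto simp: algebra_simps)
    have x1: "1 + x \<noteq> 0" using x by simp
    have e: "1 - (y - y * t) = (1 + t * x) / (1 + x)"
    proof -
      have a: "1 - x / (1 + x) = 1 / (1 + x)" using x1 by (simp add: field_simps)
      have "1 - (y - y * t) = (1 - x / (1 + x)) + t * x / (1 + x)" by (simp add: y_def)
      also have "\<dots> = (1 + t * x) / (1 + x)" unfolding a by (simp add: add_divide_distrib)
      finally show ?thesis .
    qed
    have a2: "(1 - (y - y * t)) powr (s - 1) = (1 + t * x) powr (s - 1) / (1 + x) powr (s - 1)"
      unfolding e using x t by (simp add: powr_divide)
    have a3: "y powr \<beta> * y powr (- \<beta>) = 1" using y by (simp add: powr_add[symmetric])
    have a4: "(1 + x) powr (s - 1) > 0" using x by simp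
    have "k * g (y - y * t) = (y powr \<beta> * y powr (- \<beta>)) * (1 - t) powr (- \<beta>) * (1 + t * x) powr (s - 1)"
      unfolding k_def g_def a1 a2 using a4 by (simp add: field_simps)
    also have "\<dots> = (1 - t) powr (- \<beta>) * (1 + t * x) powr (- (1 - s))" unfolding a3 by simp
    finally show ?thesis .
  qed
  have h3: "((\<lambda>t. (1 - t) powr (- \<beta>) * (1 + t * x) powr (- (1 - s))) has_integral k * (G / y)) {0..1}"
    by (rule has_integral_spike_finite_eq[of "{}", THEN iffD1, OF _ _ h2]) (use pt in auto)
  have "k * (G / y) = (1 + x) powr (s - 1) * y powr (\<beta> - 1) * G"
    using y by (simp add: k_def powr_diff field_simps)
  then show ?thesis using h3 unfolding y_def by (simp add: integral_unique)
qed

lemma R_lim: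
  fixes s y :: real assumes s: "s > -1" and y: "0 < y" "y < 1"
  shows "((\<lambda>\<beta>. integral {y..1} (\<lambda>v. v powr (- \<beta>) * (1 - v) powr s)) \<longlongrightarrow>
           integral {y..1} (\<lambda>v. v powr (- 1) * (1 - v) powr s)) (at_left 1)"
proof (rule tendsto_at_left_sequentially[where b=0])
  fix S :: "nat \<Rightarrow> real"
  assume S: "\<And>n. S n < 1" "\<And>n. 0 < S n" "S \<longlonglongrightarrow> 1"
  define f where "f n v = v powr (- S n) * (1 - v) powr s" for n v
  define h where "h v = (1 - v) powr s * (1 / y)" for v
  have fi: "f n integrable_on {y..1}" for n unfolding f_def
    by (rule integrable_subinterval_real[OF hH_int[OF s S(2) S(1)]]) (use y in auto)
  have hi: "h integrable_on {y..1}" unfolding h_def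
    by (intro integrable_on_mult_left integrable_subinterval_real[OF int_1mt_powr[OF s]]) (use y in auto)
  have le: "norm (f n v) \<le> h v" if "v \<in> {y..1}" for n v
  proof -
    have v: "y \<le> v" "v \<le> 1" "0 < v" using that y by auto
    have "v powr (- S n) \<le> v powr (- 1)" using v S(1)[of n] by (intro powr_mono') auto
    also have "\<dots> = 1 / v" using v by (simp add: powr_minus_divide)
    also have "\<dots> \<le> 1 / y" using v y by (simp add: field_simps)
    finally have "v powr (- S n) \<le> 1 / y" .
    then have "v powr (- S n) * (1 - v) powr s \<le> 1 / y * (1 - v) powr s"
      by (rule mult_right_mono) simp
    then show ?thesis unfolding f_def h_def norm_mult by simp
  qed
  have conv: "(\<lambda>n. f n v) \<longlonglongrightarrow> v powr (- 1) * (1 - v) powr s" if "v \<in> {y..1}" for v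
    unfolding f_def using that y by (intro tendsto_intros S(3)) auto
  show "(\<lambda>n. integral {y..1} (\<lambda>v. v powr (- S n) * (1 - v) powr s)) \<longlonglongrightarrow>
           integral {y..1} (\<lambda>v. v powr (- 1) * (1 - v) powr s)"
    using dominated_convergence(2)[OF fi hi le conv] unfolding f_def .
qed simp

lemma C1:
  fixes s x :: real assumes s: "s > -1" and x: "x > 1"
  shows "integral {x / (1 + x)..1} (\<lambda>v. v powr (- 1) * (1 - v) powr s)
          = (1 + x) powr (- s) * integral {0..1} (\<lambda>t. (1 - t) powr s / (x + t))"
proof -
  define J where "J = integral {0..1} (\<lambda>t. (1 - t) powr s / (x + t))"
  have hJ: "((\<lambda>t. (1 - t) powr s / (x + t)) has_integral J) {0..1}"
    unfolding J_def using J_series(1)[OF s x] by (simp add: integrable_integral)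
  have "((\<lambda>v. (\<lambda>t. (1 - t) powr s / (x + t)) ((1 + x) *\<^sub>R v + - x)) has_integral (J /\<^sub>R (1 + x) ^ DIM(real)))
          (cbox ((0 - - x) /\<^sub>R (1 + x)) ((1 - - x) /\<^sub>R (1 + x)))"
    using x by (intro has_integral_affinity'[OF hJ[unfolded cbox_interval[symmetric]]]) auto
  moreover have ends: "(0 - - x) /\<^sub>R (1 + x) = x / (1 + x)" "(1 - - x) /\<^sub>R (1 + x) = 1"
    using x by (auto simp: field_simps)
  ultimately have h1: "((\<lambda>v. (1 - ((1 + x) * v - x)) powr s / (x + ((1 + x) * v - x))) has_integral J / (1 + x))
          {x / (1 + x)..1}"
    unfolding ends cbox_interval by (simp add: algebra_simps flip: divide_inverse)
  define k where "k = (1 + x) powr (s - 1)"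
  have k: "k > 0" using x by (simp add: k_def)
  have pt: "(1 - ((1 + x) * v - x)) powr s / (x + ((1 + x) * v - x)) = k * (v powr (- 1) * (1 - v) powr s)"
    if "v \<in> {x / (1 + x)..1}" for v
  proof -
    have v: "0 < v" "v \<le> 1" using that x by (auto simp: field_simps intro: less_le_trans[of 0 "x/(1+x)"])
    have e: "1 - ((1 + x) * v - x) = (1 + x) * (1 - v)" by (simp add: algebra_simps)
    have e2: "x + ((1 + x) * v - x) = (1 + x) * v" by simp
    have p: "(1 + x) powr s = (1 + x) * k" using x by (simp add: k_def powr_diff)
    have m: "(1 - ((1 + x) * v - x)) powr s = (1 + x) * k * (1 - v) powr s"
      unfolding e p[symmetric] using x v by (simp add: powr_mult)
    have vm: "v powr (- 1) = 1 / v" using v by (simp add: powr_minus_divide)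
    show ?thesis unfolding m e2 vm using x v by simp
  qed
  have h2: "((\<lambda>v. k * (v powr (- 1) * (1 - v) powr s)) has_integral J / (1 + x)) {x / (1 + x)..1}"
    by (rule has_integral_spike_finite_eq[of "{}", THEN iffD1, OF _ _ h1]) (use pt in auto)
  then have "((\<lambda>v. v powr (- 1) * (1 - v) powr s) has_integral J / (1 + x) / k) {x / (1 + x)..1}"
    using has_integral_mult_right_iff[of k, THEN iffD1, OF _ h2] k by simp
  moreover have "J / (1 + x) / k = (1 + x) powr (- s) * J"
  proof -
    have k': "k = (1 + x) powr s / (1 + x)" using x by (simp add: k_def powr_diff)
    have "J / (1 + x) / k = J / (1 + x) powr s" using x unfolding k' by simp
    also have "\<dots> = (1 + x) powr (- s) * J" by (simp add: powr_minus divide_inverse)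
    finally show ?thesis .
  qed
  ultimately show ?thesis unfolding J_def[symmetric] by (simp add: integral_unique)
qed



lemma part2:
  fixes \<alpha> \<sigma> K C q :: real
  assumes "\<alpha> \<noteq> 0" "\<sigma> \<noteq> 0" "\<sigma> \<noteq> 1" "\<alpha> * \<sigma> > 0" "1 + 1 / \<sigma> > 0" "q > 1 / (\<alpha> * \<sigma>)"
  shows "((\<lambda>\<beta>. u_beta K \<sigma> \<alpha> C \<beta> q + D_beta K \<sigma> \<alpha> \<beta>) \<longlongrightarrow>
                 K * \<sigma> / (\<sigma> - 1) * ((1 + \<alpha> * \<sigma> * q) powr (1 - 1 / \<sigma>) / q)
                   * (q - (\<sigma> - 1) / (\<alpha> * \<sigma>) * hyp2F1 1 1 (1 + 1 / \<sigma>) (- 1 / (\<alpha> * \<sigma> * q)))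
                 + C)
              (at_left 1)"
proof -
  define x0 where "x0 = \<alpha> * \<sigma>"
  define x where "x = x0 * q"
  define s where "s = 1 / \<sigma>"
  define y where "y = x / (1 + x)"
  define P where "P = K * \<sigma> / (\<sigma> - 1)"
  define R where "R \<beta> = integral {y..1} (\<lambda>v. v powr (- \<beta>) * (1 - v) powr s)" for \<beta>
  have x0: "x0 > 0" using assms by (simp add: x0_def)
  have q: "q > 0" using assms(6) x0 unfolding x0_def[symmetric]
    by (meson less_trans zero_less_divide_1_iff)
  have x: "x > 1" using assms(6) x0 unfolding x0_def[symmetric] x_def
    by (simp add: pos_divide_less_eq mult.commute)
  have s: "s > -1" "s \<noteq> 0" "s \<noteq> 1" using assms by (auto simp: s_def)
  have y: "0 < y" "y < 1" using x by (auto simp: y_def)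
  have eqA: "u_beta K \<sigma> \<alpha> C \<beta> q + D_beta K \<sigma> \<alpha> \<beta> = C + P * ((1 + x) powr (\<beta> - s) * q powr (1 - \<beta>)
      + x0 powr (\<beta> - 1) * (s - \<beta>) * ((s + 1 - \<beta>) * R \<beta> + y powr (1 - \<beta>) * (1 - y) powr s) / s)"
    if b: "0 < \<beta>" "\<beta> < 1" for \<beta>
  proof -
    define H where "H = integral {0..y} (\<lambda>v. v powr (- \<beta>) * (1 - v) powr s)"
    define Y where "Y = y powr (1 - \<beta>) * (1 - y) powr s"
    define G where "G = ((s + 1 - \<beta>) * H - Y) / s"
    define A where "A = (1 + x) powr (\<beta> - s) * q powr (1 - \<beta>)"
    define E where "E = x0 powr (\<beta> - 1)"
    define Bt where "Bt = Beta (1 - \<beta>) (s + 1)"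
    have hG: "((\<lambda>v. v powr (- \<beta>) * (1 - v) powr (s - 1)) has_integral G) {0..x / (1 + x)}"
      using E2[OF s(1,2) b y] unfolding G_def H_def Y_def y_def .
    have I: "integral {0..1} (\<lambda>t. (1 - t) powr (- \<beta>) * (1 + t * x) powr (- (1 - s)))
        = (1 + x) powr (s - 1) * y powr (\<beta> - 1) * G"
      using E1[OF _ b(1) hG] x unfolding y_def by simp
    have Bi: "((\<lambda>v. v powr (- \<beta>) * (1 - v) powr s) has_integral Bt) {0..1}"
      using has_integral_Beta_real[of "1 - \<beta>" "s + 1"] b s unfolding Bt_def by simp
    have B: "H + R \<beta> = Bt"
      using Henstock_Kurzweil_Integration.integral_combine[where a=0 and c=y and b=1 and f="\<lambda>v. v powr (- \<beta>) * (1 - v) powr s"] hH_int[OF s(1) b] y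
        integral_unique[OF Bi]
      unfolding H_def R_def by simp
    have Gm: "Gamma (1 - \<beta>) * Gamma s * rGamma (s - \<beta>) = Bt * (s - \<beta>) * (s + 1 - \<beta>) / s"
    proof -
      have e1: "s - 1 + (1 - \<beta>) = s - \<beta>" "s + (1 - \<beta>) = s + 1 - \<beta>" by simp_all
      show ?thesis using gam_id[of "1 - \<beta>" s] b s unfolding e1 Bt_def by simp
    qed
    have u: "u_beta K \<sigma> \<alpha> C \<beta> q = P * (1 + x) powr (\<beta> - s) * q powr (1 - \<beta>) *
        (1 + (\<beta> - s) * integral {0..1} (\<lambda>t. (1 - t) powr (- \<beta>) * (1 + t * x) powr (- (1 - s)))) + C"
      by (simp add: u_beta_def P_def x_def x0_def s_def mult.assoc)
    have D: "D_beta K \<sigma> \<alpha> \<beta> = P * (Gamma (1 - \<beta>) * Gamma s * rGamma (s - \<beta>)) * x0 powr (\<beta> - 1)"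
      by (simp add: D_beta_def P_def s_def x0_def)
    have key: "A * ((1 + x) powr (s - 1) * y powr (\<beta> - 1)) = E"
    proof -
      have a1: "y powr (\<beta> - 1) = x powr (\<beta> - 1) / (1 + x) powr (\<beta> - 1)"
        unfolding y_def using x by (simp add: powr_divide)
      have a2: "x powr (\<beta> - 1) = x0 powr (\<beta> - 1) * q powr (\<beta> - 1)"
        unfolding x_def using x0 q by (simp add: powr_mult)
      have a3: "(1 + x) powr (\<beta> - s) * (1 + x) powr (s - 1) = (1 + x) powr (\<beta> - 1)"
        by (simp add: powr_add[symmetric])
      have a4: "q powr (1 - \<beta>) * q powr (\<beta> - 1) = 1" using q by (simp add: powr_add[symmetric])
      have a5: "(1 + x) powr (\<beta> - 1) > 0" using x by simp
      have "A * ((1 + x) powr (s - 1) * y powr (\<beta> - 1)) =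
          ((1 + x) powr (\<beta> - s) * (1 + x) powr (s - 1)) * (q powr (1 - \<beta>) * q powr (\<beta> - 1)) * x0 powr (\<beta> - 1)
           / (1 + x) powr (\<beta> - 1)"
        unfolding A_def a1 a2 by (simp add: field_simps)
      also have "\<dots> = E" unfolding a3 a4 E_def using a5 by simp
      finally show ?thesis .
    qed
    have "u_beta K \<sigma> \<alpha> C \<beta> q + D_beta K \<sigma> \<alpha> \<beta>
        = C + P * (A + (\<beta> - s) * (A * ((1 + x) powr (s - 1) * y powr (\<beta> - 1))) * G + Bt * (s - \<beta>) * (s + 1 - \<beta>) / s * E)"
      unfolding u D I Gm A_def E_def by (simp add: algebra_simps)
    also have "\<dots> = C + P * (A + (\<beta> - s) * E * G + Bt * (s - \<beta>) * (s + 1 - \<beta>) / s * E)"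
      unfolding key ..
    also have "\<dots> = C + P * (A + E * (s - \<beta>) * ((s + 1 - \<beta>) * R \<beta> + Y) / s)"
      unfolding G_def B[symmetric] using s by (simp add: field_simps)
    finally show ?thesis unfolding A_def E_def Y_def .
  qed
  have Rl: "(R \<longlongrightarrow> R 1) (at_left 1)"
    unfolding R_def using R_lim[OF s(1) y] by simp
  have lim: "((\<lambda>\<beta>. C + P * ((1 + x) powr (\<beta> - s) * q powr (1 - \<beta>)
      + x0 powr (\<beta> - 1) * (s - \<beta>) * ((s + 1 - \<beta>) * R \<beta> + y powr (1 - \<beta>) * (1 - y) powr s) / s))
    \<longlongrightarrow> C + P * ((1 + x) powr (1 - s) * q powr (1 - 1)
      + x0 powr (1 - 1) * (s - 1) * ((s + 1 - 1) * R 1 + y powr (1 - 1) * (1 - y) powr s) / s)) (at_left 1)"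
    using x x0 q y s by (intro tendsto_intros Rl) auto
  define J where "J = integral {0..1} (\<lambda>t. (1 - t) powr s / (x + t))"
  define F where "F = hyp2F1 1 1 (1 + s) (- 1 / x)"
  define W where "W = (1 + x) powr (- s)"
  have R1: "R 1 = W * J" using C1[OF s(1) x] unfolding R_def y_def W_def J_def by simp
  have hF: "(1 + 1 / x) * F = 1 + s * J" using hyp_id[OF s(1,2) x] unfolding F_def J_def .
  have Y1: "(1 - y) powr s = W"
  proof -
    have "1 - y = 1 / (1 + x)" using x by (simp add: y_def field_simps)
    then show ?thesis using x by (simp add: W_def powr_divide powr_minus_divide)
  qed
  have W1: "(1 + x) powr (1 - s) = (1 + x) * W"
    using x powr_add[of "1 + x" 1 "- s"] by (simp add: W_def)
  have tgt: "K * \<sigma> / (\<sigma> - 1) * ((1 + \<alpha> * \<sigma> * q) powr (1 - 1 / \<sigma>) / q)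
                   * (q - (\<sigma> - 1) / (\<alpha> * \<sigma>) * hyp2F1 1 1 (1 + 1 / \<sigma>) (- 1 / (\<alpha> * \<sigma> * q)))
                 + C = P * ((1 + x) powr (1 - s) / q) * (q - (\<sigma> - 1) / x0 * F) + C"
    by (simp add: P_def x_def x0_def s_def F_def)
  have fin: "C + P * ((1 + x) powr (1 - s) * q powr (1 - 1)
      + x0 powr (1 - 1) * (s - 1) * ((s + 1 - 1) * R 1 + y powr (1 - 1) * (1 - y) powr s) / s)
      = P * ((1 + x) powr (1 - s) / q) * (q - (\<sigma> - 1) / x0 * F) + C"
  proof -
    have sg: "\<sigma> = 1 / s" using assms by (simp add: s_def)
    have xq: "x0 = x / q" using q by (simp add: x_def)
    have hF2: "(1 + x) * F / x = 1 + s * J" using hF x by (simp add: field_simps)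
    have l: "C + P * ((1 + x) powr (1 - s) * q powr (1 - 1)
      + x0 powr (1 - 1) * (s - 1) * ((s + 1 - 1) * R 1 + y powr (1 - 1) * (1 - y) powr s) / s)
      = C + P * W * ((1 + x) + (s - 1) * (1 + s * J) / s)"
      unfolding R1 Y1 W1 using q x0 y s by (simp add: field_simps)
    have r: "P * ((1 + x) powr (1 - s) / q) * (q - (\<sigma> - 1) / x0 * F) + C
       = P * W * ((1 + x) - (\<sigma> - 1) * ((1 + x) * F / x)) + C"
      unfolding W1 xq using q x by (simp add: field_simps)
    show ?thesis unfolding l r hF2 using s by (simp add: sg field_simps)
  qed
  have ev: "eventually (\<lambda>\<beta>. C + P * ((1 + x) powr (\<beta> - s) * q powr (1 - \<beta>)
      + x0 powr (\<beta> - 1) * (s - \<beta>) * ((s + 1 - \<beta>) * R \<beta> + y powr (1 - \<beta>) * (1 - y) powr s) / s)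
      = u_beta K \<sigma> \<alpha> C \<beta> q + D_beta K \<sigma> \<alpha> \<beta>) (at_left 1)"
    using eventually_at_left_real[of 0 1] by (rule eventually_mono) (use eqA in auto)
  show ?thesis unfolding tgt using tendsto_cong[OF ev] lim unfolding fin by simp
qed


theorem theorem2:
  fixes \<alpha> \<sigma> K C :: real
  assumes "\<alpha> \<noteq> 0" and "\<sigma> \<noteq> 0" and "\<sigma> \<noteq> 1" and "K > 0"
  shows "(\<forall>q > 0. 1 + \<alpha> * \<sigma> * q > 0 \<longrightarrow>
            ((\<lambda>\<beta>. u_beta K \<sigma> \<alpha> C \<beta> q) \<longlongrightarrow>
               K / (\<alpha> * (\<sigma> - 1)) * ((1 + \<alpha> * \<sigma> * q) powr ((\<sigma> - 1) / \<sigma>) - 1) + C)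
            (at_right 0))
       \<and> (\<alpha> * \<sigma> > 0 \<and> 1 + 1 / \<sigma> > 0 \<longrightarrow>
            (\<forall>q > 1 / (\<alpha> * \<sigma>).
              ((\<lambda>\<beta>. u_beta K \<sigma> \<alpha> C \<beta> q + D_beta K \<sigma> \<alpha> \<beta>) \<longlongrightarrow>
                 K * \<sigma> / (\<sigma> - 1) * ((1 + \<alpha> * \<sigma> * q) powr (1 - 1 / \<sigma>) / q)
                   * (q - (\<sigma> - 1) / (\<alpha> * \<sigma>) * hyp2F1 1 1 (1 + 1 / \<sigma>) (- 1 / (\<alpha> * \<sigma> * q)))
                 + C)
              (at_left 1)))"
  proof (intro conjI allI impI)
  fix q :: real assume "q > 0" "1 + \<alpha> * \<sigma> * q > 0"
  then show "((\<lambda>\<beta>. u_beta K \<sigma> \<alpha> C \<beta> q) \<longlongrightarrow>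
               K / (\<alpha> * (\<sigma> - 1)) * ((1 + \<alpha> * \<sigma> * q) powr ((\<sigma> - 1) / \<sigma>) - 1) + C)
            (at_right 0)"
    using part1 assms by blast
next
  fix q :: real assume h: "\<alpha> * \<sigma> > 0 \<and> 1 + 1 / \<sigma> > 0" "q > 1 / (\<alpha> * \<sigma>)"
  then show "((\<lambda>\<beta>. u_beta K \<sigma> \<alpha> C \<beta> q + D_beta K \<sigma> \<alpha> \<beta>) \<longlongrightarrow>
                 K * \<sigma> / (\<sigma> - 1) * ((1 + \<alpha> * \<sigma> * q) powr (1 - 1 / \<sigma>) / q)
                   * (q - (\<sigma> - 1) / (\<alpha> * \<sigma>) * hyp2F1 1 1 (1 + 1 / \<sigma>) (- 1 / (\<alpha> * \<sigma> * q)))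
                 + C)
              (at_left 1)"
    using part2 assms by blast
qed

end
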